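(* Set $\lambda_*=1/\tau^2$. Along the branch of the discrete Neumann correspondence $\mathfrak B_r$ for which $\Gamma=\frac1\tau\mathbf I_r+O(\tau)$ as $\tau\to0$, one has $$\Gamma=\frac1\tau\mathbf I_r-\frac\tau2\big(X^TAX+P^TP\big)+O(\tau^2),$$ and, writing $\tilde X=X+\tau\dot X+O(\tau^2)$, $\tilde P=P+\tau\dot P+O(\tau^2)$, the first-order terms satisfy the continuous Neumann system with Euclidean metric $$\dot X=P,\qquad \dot P=AX+X\Lambda,\qquad \Lambda=-X^TAX-P^TP.$$
   Context: $A=\mathrm{diag}(a_1,\dots,a_n)$, $A(\lambda)=\lambda\mathbf I_n-A$, $A^{\pm1/2}(\lambda_* )$ the diagonal matrices with entries $(\lambda_*-a_i)^{\pm1/2}$ (positive for large real $\lambda_*$). $(X,P)$ are $n\times r$ matrices with $X^TX=\mathbf I_r$, $X^TP+P^TX=0$. The discrete Neumann correspondence is $\tilde X=A^{-1/2}(\lambda_* )(P+X\Gamma)$, $\tilde P=-A^{1/2}(\lambda_* )X+A^{-1/2}(\lambda_* )(P+X\Gamma)\Gamma$, where $\Gamma$ is a symmetric $r\times r$ solution of $\Gamma\mathbf U\Gamma+\Gamma\mathbf V+\mathbf V^T\Gamma-\mathbf W=0$ with $\mathbf U=X^TA^{-1}(\lambda_* )X$, $\mathbf V=X^TA^{-1}(\lambda_* )P$, $\mathbf W=\mathbf I_r-P^TA^{-1}(\lambda_* )P$. *)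

theory Defs
  imports "HOL-Analysis.Analysis" "HOL-Library.Landau_Symbols"
begin

definition diagA :: "real^'n \<Rightarrow> real^'n^'n" where
  "diagA a = (\<chi> i j. if i = j then a $ i else 0)"

text \<open>A^{-1}(lam) = (lam I - A)^{-1}, diagonal with entries 1/(lam - a_i).\<close>
definition Ainv :: "real \<Rightarrow> real^'n \<Rightarrow> real^'n^'n" where
  "Ainv lam a = (\<chi> i j. if i = j then inverse (lam - a $ i) else 0)"

definition Ahalf :: "real \<Rightarrow> real^'n \<Rightarrow> real^'n^'n" where
  "Ahalf lam a = (\<chi> i j. if i = j then sqrt (lam - a $ i) else 0)"

definition Aminushalf :: "real \<Rightarrow> real^'n \<Rightarrow> real^'n^'n" where
  "Aminushalf lam a = (\<chi> i j. if i = j then inverse (sqrt (lam - a $ i)) else 0)"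

definition riccati :: "real \<Rightarrow> real^'n \<Rightarrow> real^'r^'n \<Rightarrow> real^'r^'n \<Rightarrow> real^'r^'r \<Rightarrow> bool" where
  "riccati lam a X P G =
     (let U = transpose X ** Ainv lam a ** X;
          V = transpose X ** Ainv lam a ** P;
          W = mat 1 - transpose P ** Ainv lam a ** P
      in G ** U ** G + G ** V + transpose V ** G - W = 0)"

definition Xtilde :: "real \<Rightarrow> real^'n \<Rightarrow> real^'r^'n \<Rightarrow> real^'r^'n \<Rightarrow> real^'r^'r \<Rightarrow> real^'r^'n" where
  "Xtilde lam a X P G = Aminushalf lam a ** (P + X ** G)"

definition Ptilde :: "real \<Rightarrow> real^'n \<Rightarrow> real^'r^'n \<Rightarrow> real^'r^'n \<Rightarrow> real^'r^'r \<Rightarrow> real^'r^'n" where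
  "Ptilde lam a X P G = - (Ahalf lam a ** X) + Aminushalf lam a ** (P + X ** G) ** G"

end

theory Submission
  imports Defs "HOL-Real_Asymp.Real_Asymp"
begin


lemma ev_lt1: "eventually (\<lambda>t. t < (1::real)) (at_right 0)"
  using order_tendstoD(2)[OF tendsto_ident_at[of "0::real" "{0<..}"] zero_less_one] by simp

lemma norm_vec_le_sum: "norm (x::('a::real_normed_vector)^'n) \<le> (\<Sum>i\<in>UNIV. norm (x$i))"
  unfolding norm_vec_def by (rule L2_set_le_sum) auto

lemma entry_le: "\<bar>A$i$j\<bar> \<le> norm (A::real^'n^'m)"
  using component_le_norm_cart[of "A$i" j] Finite_Cartesian_Product.norm_nth_le[of A i] by linarith

lemma norm_mat_le_entries: "norm (A::real^'n^'m) \<le> (\<Sum>i\<in>UNIV. \<Sum>j\<in>UNIV. \<bar>A$i$j\<bar>)"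
proof -
  have "norm A \<le> (\<Sum>i\<in>UNIV. norm (A$i))" by (rule norm_vec_le_sum)
  also have "\<dots> \<le> (\<Sum>i\<in>UNIV. \<Sum>j\<in>UNIV. \<bar>A$i$j\<bar>)" by (intro sum_mono norm_le_l1_cart)
  finally show ?thesis .
qed

lemma norm_mm_le: "norm ((A::real^'k^'m) ** (B::real^'n^'k))
   \<le> real CARD('m) * real CARD('n) * real CARD('k) * (norm A * norm B)"
proof -
  have e: "\<bar>(A ** B)$i$j\<bar> \<le> real CARD('k) * (norm A * norm B)" for i j
  proof -
    have "\<bar>(A ** B)$i$j\<bar> = \<bar>\<Sum>k\<in>UNIV. A$i$k * B$k$j\<bar>" by (simp add: matrix_matrix_mult_def)
    also have "\<dots> \<le> (\<Sum>k\<in>UNIV. \<bar>A$i$k * B$k$j\<bar>)" by (rule sum_abs)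
    also have "\<dots> \<le> (\<Sum>k\<in>(UNIV::'k set). norm A * norm B)"
      by (intro sum_mono, unfold abs_mult, intro mult_mono entry_le) auto
    finally show ?thesis by simp
  qed
  have "norm (A**B) \<le> (\<Sum>i\<in>UNIV. \<Sum>j\<in>UNIV. \<bar>(A ** B)$i$j\<bar>)" by (rule norm_mat_le_entries)
  also have "\<dots> \<le> (\<Sum>i\<in>(UNIV::'m set). \<Sum>j\<in>(UNIV::'n set). real CARD('k) * (norm A * norm B))"
    by (intro sum_mono e)
  finally show ?thesis by (simp add: algebra_simps)
qed

lemma norm_diag_le: "norm ((\<chi> i j. if i = j then d i else 0) :: real^'n^'n) \<le> (\<Sum>i\<in>UNIV. \<bar>d i\<bar>)"
proof -
  have "norm ((\<chi> i j. if i = j then d i else 0) :: real^'n^'n)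
     \<le> (\<Sum>i\<in>UNIV. \<Sum>j\<in>UNIV. \<bar>((\<chi> i j. if i = j then d i else 0) :: real^'n^'n)$i$j\<bar>)"
    by (rule norm_mat_le_entries)
  also have "\<dots> = (\<Sum>i\<in>UNIV. \<bar>d i\<bar>)"
    by (simp add: if_distrib[of abs] cong: if_cong)
  finally show ?thesis .
qed

definition ordl :: "(real \<Rightarrow> 'a::real_normed_vector) \<Rightarrow> int \<Rightarrow> bool" where
  "ordl f k \<longleftrightarrow> (\<lambda>t. norm (f t)) \<in> O[at_right 0](\<lambda>t. t powi k)"

lemma ord_cong_ev: "eventually (\<lambda>t. f t = g t) (at_right 0) \<Longrightarrow> ordl g k \<Longrightarrow> ordl f k"
  unfolding ordl_def
  by (rule landau_o.big_trans[rotated], assumption, rule landau_o.big_mono) (auto elim: eventually_mono)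

lemma ord_mono: assumes "ordl f k" "l \<le> k" shows "ordl f l"
proof -
  have "(\<lambda>t. t powi k) \<in> O[at_right 0](\<lambda>t. (t::real) powi l)"
  proof (rule landau_o.big_mono)
    show "\<forall>\<^sub>F t in at_right 0. norm (t powi k) \<le> norm ((t::real) powi l)"
      using eventually_at_right_less[of "0::real"] ev_lt1
    proof eventually_elim
      case (elim t)
      have "t powi k = t powi l * t powi (k - l)" using elim by (simp flip: power_int_add)
      moreover have "0 \<le> t powi (k - l)" "t powi (k - l) \<le> 1" "0 \<le> t powi l"
        using elim assms(2) by (auto intro: power_int_le_one)
      ultimately have "\<bar>t powi k\<bar> \<le> \<bar>t powi l\<bar>"
        by (simp add: abs_mult mult_left_le)
      then show "norm (t powi k) \<le> norm ((t::real) powi l)" by simp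
    qed
  qed
  then show ?thesis using assms(1) unfolding ordl_def by (rule landau_o.big_trans[rotated])
qed

lemma ord_mm: assumes "ordl f k" "ordl h l"
  shows "ordl (\<lambda>t. (f t::real^'k^'m) ** (h t::real^'n^'k)) (k + l)"
proof -
  let ?C = "real CARD('m) * real CARD('n) * real CARD('k)"
  have "(\<lambda>t. norm (f t ** h t)) \<in> O[at_right 0](\<lambda>t. norm (f t) * norm (h t))"
  proof (rule bigoI[where c = ?C], rule always_eventually, rule allI)
    fix t show "norm (norm (f t ** h t)) \<le> ?C * norm (norm (f t) * norm (h t))"
      using norm_mm_le[of "f t" "h t"] by (simp add: abs_mult)
  qed
  also have "(\<lambda>t. norm (f t) * norm (h t)) \<in> O[at_right 0](\<lambda>t. t powi k * t powi l)"
    using assms unfolding ordl_def by (rule landau_o.big.mult)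
  also have "(\<lambda>t. t powi k * t powi l) \<in> O[at_right 0](\<lambda>t. (t::real) powi (k + l))"
    by (rule landau_o.big_mono, use eventually_at_right_less[of "0::real"] in eventually_elim)
       (simp add: power_int_add)
  finally show ?thesis unfolding ordl_def .
qed

lemma ord_sc: assumes "c \<in> O[at_right 0](\<lambda>t. t powi m)" "ordl f k"
  shows "ordl (\<lambda>t. c t *\<^sub>R f t) (m + k)"
proof -
  have "(\<lambda>t. norm (c t *\<^sub>R f t)) \<in> O[at_right 0](\<lambda>t. c t * norm (f t))"
    by (intro landau_o.big_mono always_eventually allI) (simp add: abs_mult)
  also have "(\<lambda>t. c t * norm (f t)) \<in> O[at_right 0](\<lambda>t. t powi m * t powi k)"
    using assms unfolding ordl_def by (rule landau_o.big.mult)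
  also have "(\<lambda>t. t powi m * t powi k) \<in> O[at_right 0](\<lambda>t. (t::real) powi (m + k))"
    by (rule landau_o.big_mono, use eventually_at_right_less[of "0::real"] in eventually_elim)
       (simp add: power_int_add)
  finally show ?thesis unfolding ordl_def .
qed

lemma sc_pow: "(\<lambda>t. (t::real)^n) \<in> O[at_right 0](\<lambda>t. t powi int n)" by simp
lemma sc_pow_half: "(\<lambda>t. (t::real)^n / 2) \<in> O[at_right 0](\<lambda>t. t powi int n)" by simp
lemma sc_inv: "(\<lambda>t. 1 / (t::real)) \<in> O[at_right 0](\<lambda>t. t powi (-1))"
  by (simp add: power_int_minus divide_inverse)
lemma sc_inv2: "(\<lambda>t. 1 / (t::real)^2) \<in> O[at_right 0](\<lambda>t. t powi (-2))"
  by (simp add: power_int_minus divide_inverse)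
lemma sc_const: "(\<lambda>t. c) \<in> O[at_right 0](\<lambda>t. (t::real) powi 0)" by simp

lemma ord_const: "ordl (\<lambda>t. M) 0"
  unfolding ordl_def by simp

lemma ord_add: assumes "ordl f k" "ordl h l" shows "ordl (\<lambda>t. f t + h t) (min k l)"
proof -
  have a: "ordl f (min k l)" "ordl h (min k l)" using assms by (auto intro: ord_mono)
  have "(\<lambda>t. norm (f t + h t)) \<in> O[at_right 0](\<lambda>t. norm (f t) + norm (h t))"
    by (intro landau_o.big_mono always_eventually allI) (simp add: norm_triangle_ineq)
  also have "(\<lambda>t. norm (f t) + norm (h t)) \<in> O[at_right 0](\<lambda>t. t powi (min k l))"
    using a unfolding ordl_def by (rule sum_in_bigo)
  finally show ?thesis unfolding ordl_def .
qed

lemma ord_diff: assumes "ordl f k" "ordl h l" shows "ordl (\<lambda>t. f t - h t) (min k l)"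
proof -
  have a: "ordl f (min k l)" "ordl h (min k l)" using assms by (auto intro: ord_mono)
  have "(\<lambda>t. norm (f t - h t)) \<in> O[at_right 0](\<lambda>t. norm (f t) + norm (h t))"
    by (intro landau_o.big_mono always_eventually allI) (simp add: norm_triangle_ineq4)
  also have "(\<lambda>t. norm (f t) + norm (h t)) \<in> O[at_right 0](\<lambda>t. t powi (min k l))"
    using a unfolding ordl_def by (rule sum_in_bigo)
  finally show ?thesis unfolding ordl_def .
qed

lemma ord_diag: assumes "\<And>i. (\<lambda>t. d i t) \<in> O[at_right 0](\<lambda>t. t powi k)"
  shows "ordl (\<lambda>t. (\<chi> i j. if i = j then d i t else 0) :: real^'n^'n) k"
proof -
  have "(\<lambda>t. norm ((\<chi> i j. if i = j then d i t else 0) :: real^'n^'n)) \<in> O[at_right 0](\<lambda>t. \<Sum>i\<in>UNIV. \<bar>d i t\<bar>)"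
    by (intro landau_o.big_mono always_eventually allI) (simp add: norm_diag_le)
  also have "(\<lambda>t. \<Sum>i\<in>UNIV. \<bar>d i t\<bar>) \<in> O[at_right 0](\<lambda>t. t powi k)"
    by (rule big_sum_in_bigo) (simp add: assms)
  finally show ?thesis unfolding ordl_def .
qed


lemma mm_add_r: "((A::real^'n^'m) + B) ** C = A ** C + B ** C"
  by (simp add: matrix_matrix_mult_def vec_eq_iff sum.distrib algebra_simps)
lemma mm_diff_l: "(A::real^'n^'m) ** (B - C) = A ** B - A ** C"
  by (simp add: matrix_matrix_mult_def vec_eq_iff sum_subtractf algebra_simps)
lemma mm_diff_r: "((A::real^'n^'m) - B) ** C = A ** C - B ** C"
  by (simp add: matrix_matrix_mult_def vec_eq_iff sum_subtractf algebra_simps)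
lemma mm_neg_l: "(A::real^'n^'m) ** (- B) = - (A ** B)"
  by (simp add: matrix_matrix_mult_def vec_eq_iff sum_negf)
lemma mm_neg_r: "(- (A::real^'n^'m)) ** B = - (A ** B)"
  by (simp add: matrix_matrix_mult_def vec_eq_iff sum_negf)
lemma mm_scale_l: "(k *\<^sub>R (A::real^'n^'m)) ** B = k *\<^sub>R (A ** B)"
  by (simp add: matrix_matrix_mult_def vec_eq_iff sum_distrib_left mult_ac)
lemma mm_scale_r: "(A::real^'n^'m) ** (k *\<^sub>R B) = k *\<^sub>R (A ** B)"
  by (simp add: matrix_matrix_mult_def vec_eq_iff sum_distrib_left mult_ac)
lemma vec2: fixes A :: "real^'a^'b"
  shows "2 * A = (2::real) *\<^sub>R A" "A * 2 = (2::real) *\<^sub>R A"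
  by (simp_all add: vec_eq_iff)
lemmas msimps = vec2 matrix_add_ldistrib mm_add_r mm_diff_l mm_diff_r mm_neg_l mm_neg_r
   matrix_mul_assoc mm_scale_l mm_scale_r

lemma s1: "(\<lambda>t::real. inverse (1/t^2 - c) - t^2 - t^4*c) \<in> O[at_right 0](\<lambda>t. t powi 6)"
  unfolding power_int_numeral by real_asymp
lemma s2: "(\<lambda>t::real. inverse (sqrt (1/t^2 - c)) - t - t^3/2*c) \<in> O[at_right 0](\<lambda>t. t powi 5)"
  unfolding power_int_numeral by real_asymp
lemma s3: "(\<lambda>t::real. sqrt (1/t^2 - c) - 1/t + t/2*c) \<in> O[at_right 0](\<lambda>t. t powi 3)"
  unfolding power_int_numeral by real_asymp
lemma sc_t: "(\<lambda>t. (t::real)) \<in> O[at_right 0](\<lambda>t. t powi 1)" by simp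
lemma sc_th: "(\<lambda>t. (t::real)/2) \<in> O[at_right 0](\<lambda>t. t powi 1)" by simp
lemma sc_2t: "(\<lambda>t. 2 * (t::real)) \<in> O[at_right 0](\<lambda>t. t powi 1)" by simp
lemma sc_2inv: "(\<lambda>t. 2 / (t::real)) \<in> O[at_right 0](\<lambda>t. t powi (-1))"
  unfolding power_int_minus power_int_1_right by real_asymp
lemma sc_m: "(\<lambda>t. - (1 / (2 * (t::real)))) \<in> O[at_right 0](\<lambda>t. t powi (-1))"
  unfolding power_int_minus power_int_1_right by real_asymp

theorem mainTheorem17:
  fixes a :: "real^'n" and X P :: "real^'r^'n" and \<Gamma> :: "real \<Rightarrow> real^'r^'r"
  assumes orth: "transpose X ** X = mat 1"
    and tang: "transpose X ** P + transpose P ** X = 0"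
    and sol: "\<forall>\<^sub>F \<tau> in at_right 0.
                transpose (\<Gamma> \<tau>) = \<Gamma> \<tau> \<and> riccati (1 / \<tau>^2) a X P (\<Gamma> \<tau>)"
    and branch: "(\<lambda>\<tau>. norm (\<Gamma> \<tau> - (1 / \<tau>) *\<^sub>R mat 1)) \<in> O[at_right 0](\<lambda>\<tau>. \<tau>)"
  shows "(\<lambda>\<tau>. norm (\<Gamma> \<tau> - ((1 / \<tau>) *\<^sub>R mat 1
              - (\<tau> / 2) *\<^sub>R (transpose X ** diagA a ** X + transpose P ** P))))
           \<in> O[at_right 0](\<lambda>\<tau>. \<tau>^2)
    \<and> (\<lambda>\<tau>. norm (Xtilde (1 / \<tau>^2) a X P (\<Gamma> \<tau>) - (X + \<tau> *\<^sub>R P)))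
           \<in> O[at_right 0](\<lambda>\<tau>. \<tau>^2)
    \<and> (\<lambda>\<tau>. norm (Ptilde (1 / \<tau>^2) a X P (\<Gamma> \<tau>)
              - (P + \<tau> *\<^sub>R (diagA a ** X
                   + X ** (- (transpose X ** diagA a ** X) - transpose P ** P)))))
           \<in> O[at_right 0](\<lambda>\<tau>. \<tau>^2)"
proof -
  define In where "In = (mat 1 :: real^'n^'n)"
  define I where "I = (mat 1 :: real^'r^'r)"
  define D where "D = diagA a"
  define R1 where "R1 t = Ainv (1/t^2) a - t^2 *\<^sub>R In - t^4 *\<^sub>R D" for t
  define R2 where "R2 t = Aminushalf (1/t^2) a - t *\<^sub>R In - (t^3/2) *\<^sub>R D" for t
  define R3 where "R3 t = Ahalf (1/t^2) a - (1/t) *\<^sub>R In + (t/2) *\<^sub>R D" for t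
  define G where "G t = \<Gamma> t - (1/t) *\<^sub>R I" for t
  define K where "K = transpose X ** D ** X"
  define Q where "Q = transpose P ** P"
  define M where "M = K + Q"
  define N where "N = transpose X ** P"
  define u where "u t = transpose X ** R1 t ** X" for t
  define v where "v t = t^4 *\<^sub>R (transpose X ** D ** P) + transpose X ** R1 t ** P" for t
  define v' where "v' t = t^4 *\<^sub>R (transpose P ** D ** X) + transpose P ** R1 t ** X" for t
  define w where "w t = t^4 *\<^sub>R (transpose P ** D ** P) + transpose P ** R1 t ** P" for t
  define rest where "rest t = (1/t^2) *\<^sub>R u t + t^3 *\<^sub>R (K ** G t) + (1/t) *\<^sub>R (u t ** G t)
     + t^3 *\<^sub>R (G t ** K) + (1/t) *\<^sub>R (G t ** u t) + t^2 *\<^sub>R (G t ** G t)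
     + t^4 *\<^sub>R (G t ** K ** G t) + G t ** u t ** G t + (1/t) *\<^sub>R v t + t^2 *\<^sub>R (G t ** N)
     + G t ** v t + (1/t) *\<^sub>R v' t + t^2 *\<^sub>R (transpose N ** G t) + v' t ** G t + w t" for t
  define rest3 where "rest3 t = t *\<^sub>R (P ** G t) + t *\<^sub>R (X ** G t ** G t) + (t^2/2) *\<^sub>R (D ** P)
     + (t^3/2) *\<^sub>R (D ** P ** G t) + t^2 *\<^sub>R (D ** X ** G t) + (t^3/2) *\<^sub>R (D ** X ** G t ** G t)
     + (1/t) *\<^sub>R (R2 t ** P) + R2 t ** P ** G t + (1/t^2) *\<^sub>R (R2 t ** X)
     + (2/t) *\<^sub>R (R2 t ** X ** G t) + R2 t ** X ** G t ** G t - R3 t ** X" for t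

  have orth': "B ** transpose X ** X = B" for B :: "real^'r^'r"
    by (metis matrix_mul_assoc orth matrix_mul_rid)

  have eqR1: "R1 = (\<lambda>t. \<chi> i j. if i = j then inverse (1/t^2 - a$i) - t^2 - t^4 * a$i else 0)"
    by (rule ext) (simp add: R1_def Ainv_def In_def D_def diagA_def mat_def vec_eq_iff)
  have hR1: "ordl R1 6" unfolding eqR1 by (rule ord_diag) (rule s1)
  have eqR2: "R2 = (\<lambda>t. \<chi> i j. if i = j then inverse (sqrt (1/t^2 - a$i)) - t - t^3/2 * a$i else 0)"
    by (rule ext) (simp add: R2_def Aminushalf_def In_def D_def diagA_def mat_def vec_eq_iff)
  have hR2: "ordl R2 5" unfolding eqR2 by (rule ord_diag) (rule s2)
  have eqR3: "R3 = (\<lambda>t. \<chi> i j. if i = j then sqrt (1/t^2 - a$i) - 1/t + t/2 * a$i else 0)"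
    by (rule ext) (simp add: R3_def Ahalf_def In_def D_def diagA_def mat_def vec_eq_iff)
  have hR3: "ordl R3 3" unfolding eqR3 by (rule ord_diag) (rule s3)
  have hG: "ordl G 1" using branch by (simp add: ordl_def G_def I_def)

  have ev: "eventually (\<lambda>t. 0 < t \<and> riccati (1 / t^2) a X P (\<Gamma> t)) (at_right 0)"
    by (rule eventually_mono[OF eventually_conj[OF eventually_at_right_less sol]]) auto

  have Gm: "\<Gamma> t = (1/t) *\<^sub>R I + G t" for t by (simp add: G_def)

  have key: "G t + (t/2) *\<^sub>R M = - (1/(2*t)) *\<^sub>R rest t"
    if t0: "t \<noteq> 0" and ric: "riccati (1/t^2) a X P (\<Gamma> t)" for t
  proof -
    have Ai: "Ainv (1/t^2) a = t^2 *\<^sub>R In + t^4 *\<^sub>R D + R1 t" by (simp add: R1_def)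
    have AiT: "transpose (Ainv (1/t^2) a) = Ainv (1/t^2) a"
      by (simp add: Ainv_def transpose_def vec_eq_iff)
    have VT: "transpose (transpose X ** Ainv (1/t^2) a ** P) = transpose P ** Ainv (1/t^2) a ** X"
      by (simp add: matrix_transpose_mul AiT matrix_mul_assoc)
    have Z: "\<Gamma> t ** (transpose X ** Ainv (1/t^2) a ** X) ** \<Gamma> t
       + \<Gamma> t ** (transpose X ** Ainv (1/t^2) a ** P)
       + transpose P ** Ainv (1/t^2) a ** X ** \<Gamma> t
       - (mat 1 - transpose P ** Ainv (1/t^2) a ** P) = 0"
      using ric unfolding riccati_def Let_def VT .
    have E: "\<Gamma> t ** (transpose X ** Ainv (1/t^2) a ** X) ** \<Gamma> t
       + \<Gamma> t ** (transpose X ** Ainv (1/t^2) a ** P)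
       + transpose P ** Ainv (1/t^2) a ** X ** \<Gamma> t
       - (mat 1 - transpose P ** Ainv (1/t^2) a ** P)
       = t *\<^sub>R G t + t *\<^sub>R G t + t^2 *\<^sub>R M + t *\<^sub>R (transpose X ** P + transpose P ** X) + rest t"
      unfolding Ai Gm M_def rest_def u_def v_def v'_def w_def K_def Q_def N_def I_def In_def
      using t0 by (simp add: msimps algebra_simps orth orth' matrix_transpose_mul
          power2_eq_square power3_eq_cube power4_eq_xxxx)
    have dbl: "t *\<^sub>R G t + t *\<^sub>R G t = (2*t) *\<^sub>R G t"
      by (metis mult_2 scaleR_left_distrib)
    have h: "((2*t) *\<^sub>R G t + t^2 *\<^sub>R M) + rest t = 0"
      using Z unfolding E tang dbl by simp
    then have rest_eq: "rest t = - ((2*t) *\<^sub>R G t + t^2 *\<^sub>R M)"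
      by (metis add.commute eq_neg_iff_add_eq_0)
    have c1: "(1/(2*t))*(2*t) = 1" "1/(2*t)*t\<^sup>2 = t/2"
      using t0 by (simp_all add: field_simps power2_eq_square)
    have "- ((1/(2*t)) *\<^sub>R rest t) = ((1/(2*t))*t^2) *\<^sub>R M + ((1/(2*t))*(2*t)) *\<^sub>R G t"
      unfolding rest_eq by (simp only: scaleR_add_right scaleR_minus_right scaleR_scaleR minus_add_distrib minus_minus add.commute)
    then show ?thesis using c1 by (simp add: add.commute)
  qed

  have hu: "ordl u 6" unfolding u_def
    by (rule ord_mono[OF ord_mm[OF ord_mm[OF ord_const hR1] ord_const]]) simp
  have hv: "ordl v 4" unfolding v_def
    by (rule ord_mono[OF ord_add[OF ord_sc[OF sc_pow ord_const] ord_mm[OF ord_mm[OF ord_const hR1] ord_const]]]) simp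
  have hv': "ordl v' 4" unfolding v'_def
    by (rule ord_mono[OF ord_add[OF ord_sc[OF sc_pow ord_const] ord_mm[OF ord_mm[OF ord_const hR1] ord_const]]]) simp
  have hw: "ordl w 4" unfolding w_def
    by (rule ord_mono[OF ord_add[OF ord_sc[OF sc_pow ord_const] ord_mm[OF ord_mm[OF ord_const hR1] ord_const]]]) simp
  have r1: "ordl (\<lambda>t. (1/t^2) *\<^sub>R u t) 3" by (rule ord_mono[OF ord_sc[OF sc_inv2 hu]]) simp
  have r2: "ordl (\<lambda>t. t^3 *\<^sub>R (K ** G t)) 3" by (rule ord_mono[OF ord_sc[OF sc_pow ord_mm[OF ord_const hG]]]) simp
  have r3: "ordl (\<lambda>t. (1/t) *\<^sub>R (u t ** G t)) 3" by (rule ord_mono[OF ord_sc[OF sc_inv ord_mm[OF hu hG]]]) simp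
  have r4: "ordl (\<lambda>t. t^3 *\<^sub>R (G t ** K)) 3" by (rule ord_mono[OF ord_sc[OF sc_pow ord_mm[OF hG ord_const]]]) simp
  have r5: "ordl (\<lambda>t. (1/t) *\<^sub>R (G t ** u t)) 3" by (rule ord_mono[OF ord_sc[OF sc_inv ord_mm[OF hG hu]]]) simp
  have r6: "ordl (\<lambda>t. t^2 *\<^sub>R (G t ** G t)) 3" by (rule ord_mono[OF ord_sc[OF sc_pow ord_mm[OF hG hG]]]) simp
  have r7: "ordl (\<lambda>t. t^4 *\<^sub>R (G t ** K ** G t)) 3" by (rule ord_mono[OF ord_sc[OF sc_pow ord_mm[OF ord_mm[OF hG ord_const] hG]]]) simp
  have r8: "ordl (\<lambda>t. G t ** u t ** G t) 3" by (rule ord_mono[OF ord_mm[OF ord_mm[OF hG hu] hG]]) simp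
  have r9: "ordl (\<lambda>t. (1/t) *\<^sub>R v t) 3" by (rule ord_mono[OF ord_sc[OF sc_inv hv]]) simp
  have r10: "ordl (\<lambda>t. t^2 *\<^sub>R (G t ** N)) 3" by (rule ord_mono[OF ord_sc[OF sc_pow ord_mm[OF hG ord_const]]]) simp
  have r11: "ordl (\<lambda>t. G t ** v t) 3" by (rule ord_mono[OF ord_mm[OF hG hv]]) simp
  have r12: "ordl (\<lambda>t. (1/t) *\<^sub>R v' t) 3" by (rule ord_mono[OF ord_sc[OF sc_inv hv']]) simp
  have r13: "ordl (\<lambda>t. t^2 *\<^sub>R (transpose N ** G t)) 3" by (rule ord_mono[OF ord_sc[OF sc_pow ord_mm[OF ord_const hG]]]) simp
  have r14: "ordl (\<lambda>t. v' t ** G t) 3" by (rule ord_mono[OF ord_mm[OF hv' hG]]) simp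
  have hrest: "ordl rest 3" unfolding rest_def
    by (rule ord_mono[OF ord_add[OF ord_add[OF ord_add[OF ord_add[OF ord_add[OF ord_add[OF ord_add[OF
        ord_add[OF ord_add[OF ord_add[OF ord_add[OF ord_add[OF ord_add[OF ord_add[OF
        r1 r2] r3] r4] r5] r6] r7] r8] r9] r10] r11] r12] r13] r14] hw]]) simp

  have hG2: "ordl (\<lambda>t. G t + (t/2) *\<^sub>R M) 2"
  proof (rule ord_cong_ev)
    show "\<forall>\<^sub>F t in at_right 0. G t + (t/2) *\<^sub>R M = - (1/(2*t)) *\<^sub>R rest t"
      using ev by (rule eventually_mono) (simp add: key)
    show "ordl (\<lambda>t. - (1/(2*t)) *\<^sub>R rest t) 2"
      by (rule ord_mono[OF ord_sc[OF sc_m hrest]]) simp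
  qed

  have g1: "ordl (\<lambda>\<tau>. \<Gamma> \<tau> - ((1 / \<tau>) *\<^sub>R mat 1
              - (\<tau> / 2) *\<^sub>R (transpose X ** diagA a ** X + transpose P ** P))) 2"
  proof (rule ord_cong_ev[OF always_eventually hG2], rule allI)
    fix t show "\<Gamma> t - ((1 / t) *\<^sub>R mat 1 - (t / 2) *\<^sub>R (transpose X ** diagA a ** X + transpose P ** P))
      = G t + (t/2) *\<^sub>R M"
      by (simp add: G_def M_def K_def Q_def D_def I_def algebra_simps)
  qed

  have g2: "ordl (\<lambda>\<tau>. Xtilde (1 / \<tau>^2) a X P (\<Gamma> \<tau>) - (X + \<tau> *\<^sub>R P)) 2"
  proof (rule ord_cong_ev)
    show "\<forall>\<^sub>F t in at_right 0. Xtilde (1 / t^2) a X P (\<Gamma> t) - (X + t *\<^sub>R P)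
      = t *\<^sub>R (X ** G t) + (t^3/2) *\<^sub>R (D ** P) + (t^2/2) *\<^sub>R (D ** X)
        + (t^3/2) *\<^sub>R (D ** X ** G t) + R2 t ** P + (1/t) *\<^sub>R (R2 t ** X) + R2 t ** X ** G t"
      using eventually_at_right_less
    proof (rule eventually_mono)
      fix t :: real assume "0 < t"
      then have t0: "t \<noteq> 0" by simp
      have S: "Aminushalf (1/t^2) a = t *\<^sub>R In + (t^3/2) *\<^sub>R D + R2 t" by (simp add: R2_def)
      show "Xtilde (1 / t^2) a X P (\<Gamma> t) - (X + t *\<^sub>R P)
      = t *\<^sub>R (X ** G t) + (t^3/2) *\<^sub>R (D ** P) + (t^2/2) *\<^sub>R (D ** X)
        + (t^3/2) *\<^sub>R (D ** X ** G t) + R2 t ** P + (1/t) *\<^sub>R (R2 t ** X) + R2 t ** X ** G t"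
        unfolding Xtilde_def S Gm I_def In_def
        using t0 by (simp add: msimps algebra_simps power2_eq_square power3_eq_cube)
    qed
    show "ordl (\<lambda>t. t *\<^sub>R (X ** G t) + (t^3/2) *\<^sub>R (D ** P) + (t^2/2) *\<^sub>R (D ** X)
        + (t^3/2) *\<^sub>R (D ** X ** G t) + R2 t ** P + (1/t) *\<^sub>R (R2 t ** X) + R2 t ** X ** G t) 2"
      by (rule ord_mono[OF ord_add[OF ord_add[OF ord_add[OF ord_add[OF ord_add[OF ord_add[OF
          ord_sc[OF sc_t ord_mm[OF ord_const hG]]
          ord_sc[OF sc_pow_half ord_const]]
          ord_sc[OF sc_pow_half ord_const]]
          ord_sc[OF sc_pow_half ord_mm[OF ord_const hG]]]
          ord_mm[OF hR2 ord_const]]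
          ord_sc[OF sc_inv ord_mm[OF hR2 ord_const]]]
          ord_mm[OF ord_mm[OF hR2 ord_const] hG]]]) simp
  qed

  have hr3: "ordl rest3 2" unfolding rest3_def
    by (rule ord_mono[OF ord_diff[OF ord_add[OF ord_add[OF ord_add[OF ord_add[OF ord_add[OF ord_add[OF
        ord_add[OF ord_add[OF ord_add[OF ord_add[OF
        ord_sc[OF sc_t ord_mm[OF ord_const hG]]
        ord_sc[OF sc_t ord_mm[OF ord_mm[OF ord_const hG] hG]]]
        ord_sc[OF sc_pow_half ord_const]]
        ord_sc[OF sc_pow_half ord_mm[OF ord_const hG]]]
        ord_sc[OF sc_pow ord_mm[OF ord_const hG]]]
        ord_sc[OF sc_pow_half ord_mm[OF ord_mm[OF ord_const hG] hG]]]
        ord_sc[OF sc_inv ord_mm[OF hR2 ord_const]]]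
        ord_mm[OF ord_mm[OF hR2 ord_const] hG]]
        ord_sc[OF sc_inv2 ord_mm[OF hR2 ord_const]]]
        ord_sc[OF sc_2inv ord_mm[OF ord_mm[OF hR2 ord_const] hG]]]
        ord_mm[OF ord_mm[OF ord_mm[OF hR2 ord_const] hG] hG]]
        ord_mm[OF hR3 ord_const]]]) simp
  have g3: "ordl (\<lambda>\<tau>. Ptilde (1 / \<tau>^2) a X P (\<Gamma> \<tau>)
              - (P + \<tau> *\<^sub>R (diagA a ** X
                   + X ** (- (transpose X ** diagA a ** X) - transpose P ** P)))) 2"
  proof (rule ord_cong_ev)
    show "\<forall>\<^sub>F t in at_right 0. Ptilde (1 / t^2) a X P (\<Gamma> t)
              - (P + t *\<^sub>R (diagA a ** X
                   + X ** (- (transpose X ** diagA a ** X) - transpose P ** P)))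
      = 2 *\<^sub>R (X ** (G t + (t/2) *\<^sub>R M)) + rest3 t"
      using eventually_at_right_less
    proof (rule eventually_mono)
      fix t :: real assume "0 < t"
      then have t0: "t \<noteq> 0" by simp
      have S: "Aminushalf (1/t^2) a = t *\<^sub>R In + (t^3/2) *\<^sub>R D + R2 t" by (simp add: R2_def)
      have H: "Ahalf (1/t^2) a = (1/t) *\<^sub>R In - (t/2) *\<^sub>R D + R3 t" by (simp add: R3_def)
      show "Ptilde (1 / t^2) a X P (\<Gamma> t)
              - (P + t *\<^sub>R (diagA a ** X
                   + X ** (- (transpose X ** diagA a ** X) - transpose P ** P)))
      = 2 *\<^sub>R (X ** (G t + (t/2) *\<^sub>R M)) + rest3 t"
        unfolding Ptilde_def S H Gm I_def In_def rest3_def M_def K_def Q_def D_def[symmetric]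
        using t0 by (simp add: msimps algebra_simps power2_eq_square power3_eq_cube)
    qed
    show "ordl (\<lambda>t. 2 *\<^sub>R (X ** (G t + (t/2) *\<^sub>R M)) + rest3 t) 2"
      by (rule ord_mono[OF ord_add[OF ord_sc[OF sc_const ord_mm[OF ord_const hG2]] hr3]]) simp
  qed

  show ?thesis
    using g1 g2 g3 unfolding ordl_def power_int_numeral by blast
qed

end
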